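(* Let $E$ be a Prohorov space. For $t\ge0$ and $x\in E$ let $\mu_t(x,\cdot)\in M_\kappa^+(E)$ be such that $x\mapsto\mu_t(x,B)$ is $\mathscr B(E)$-measurable for all $B\in\mathscr B(E)$, $t\ge0$, and $\mu_0(x,\cdot)=\delta_x$ for all $x\in E$. Suppose that for every $T\ge0$, $\sup_{t\le T}\sup_{x\in E}\big(\kappa(x)\int_E\kappa(y)^{-1}\,\mu_t(x,dy)\big)<\infty$, and that for every $T\in(0,\infty)$, every compact $C\subset E$ and every $\varphi\in C_\kappa(E)$ the map $[0,T]\times C\ni(t,x)\mapsto\int_E\varphi(y)\,\mu_t(x,dy)$ is continuous. Then: (4) for every $T\ge0$ and every compact $C\subset E$ the family $\{\kappa(x)\kappa(y)^{-1}\mu_t(x,dy)\colon x\in C,\ t\in[0,T]\}$ is tight; and (5) for every $x\in E$, every sequence $x_n\to x$ and every sequence $t_n\ge 0$, $t_n\to0$, one has $\mu_{t_n}(x_n,\cdot)\to\delta_x$ narrowly in $M_\kappa(E)$.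
   Context: Standing assumptions and notation. $E$ is a completely regular Hausdorff topological space such that (1) every compact subset of $E$ is metrizable, (2) the Borel $\sigma$-algebra $\mathscr B(E)$ equals the Baire $\sigma$-algebra of $E$, and (3) a function $\varphi\colon E\to\mathbb R$ is continuous if and only if its restriction to every compact subset of $E$ is continuous. $\kappa\colon E\to(0,\infty)$ is a continuous weight function. $C_\kappa(E)$ denotes the space of continuous $\varphi\colon E\to\mathbb R$ with $\|\varphi\|_\kappa:=\sup_{x\in E}|\kappa(x)\varphi(x)|<\infty$. $M_\kappa(E)$ denotes the space of signed Radon measures $\mu$ on $(E,\mathscr B(E))$ (i.e. $|\mu|(E)<\infty$ and for every Borel $B$ and $\varepsilon>0$ there is a compact $C\subset B$ with $|\mu|(B\setminus C)<\varepsilon$) such that $\int_E\kappa^{-1}\,d|\mu|<\infty$; $M_\kappa^+(E)$ denotes its nonnegative elements; $M_\kappa(E)$ carries the narrow topology, the weakest topology making $\mu\mapsto\int\varphi\,d\mu$ continuous for every $\varphi\in C_\kappa(E)$. $M_b^+(E)$ is $M_1^+(E)$ (finite nonnegative Radon measures) with the narrow topology induced by bounded continuous functions. A family $\mathcal F$ of measures is tight if for every $\varepsilon>0$ there is a compact $C_\varepsilon\subset E$ with $\sup_{\mu\in\mathcal F}|\mu|(E\setminus C_\varepsilon)<\varepsilon$. $E$ is called a Prohorov space if every compact subset of $M_b^+(E)$ (narrow topology) is tight. *)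

theory Defs
  imports "HOL-Analysis.Analysis" "HOL-Probability.Probability"
begin

definition standing_space :: "'a::topological_space itself \<Rightarrow> bool" where
  "standing_space _ \<longleftrightarrow>
     completely_regular_space (euclidean :: 'a topology) \<and>
     Hausdorff_space (euclidean :: 'a topology) \<and>
     (\<forall>C::'a set. compact C \<longrightarrow> metrizable_space (subtopology euclidean C)) \<and>
     sets (borel :: 'a measure) =
       sigma_sets UNIV {f -` U | (f :: 'a \<Rightarrow> real) U. continuous_on UNIV f \<and> open U} \<and>
     (\<forall>f :: 'a \<Rightarrow> real. continuous_on UNIV f \<longleftrightarrow> (\<forall>C. compact C \<longrightarrow> continuous_on C f))"

definition weight :: "('a::topological_space \<Rightarrow> real) \<Rightarrow> bool" where
  "weight \<kappa> \<longleftrightarrow> continuous_on UNIV \<kappa> \<and> (\<forall>x. \<kappa> x > 0)"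

definition C_kappa :: "('a::topological_space \<Rightarrow> real) \<Rightarrow> ('a \<Rightarrow> real) set" where
  "C_kappa \<kappa> = {\<phi>. continuous_on UNIV \<phi> \<and> (\<exists>B. \<forall>x. \<bar>\<kappa> x * \<phi> x\<bar> \<le> B)}"

definition radon_pos :: "'a::topological_space measure \<Rightarrow> bool" where
  "radon_pos M \<longleftrightarrow> sets M = sets borel \<and> emeasure M UNIV < \<infinity> \<and>
     (\<forall>B \<in> sets borel. \<forall>e>0. \<exists>C. compact C \<and> C \<subseteq> B \<and> emeasure M (B - C) < ennreal e)"

definition M_kappa_pos :: "('a::topological_space \<Rightarrow> real) \<Rightarrow> 'a measure set" where
  "M_kappa_pos \<kappa> = {M. radon_pos M \<and> (\<integral>\<^sup>+ y. ennreal (1 / \<kappa> y) \<partial>M) < \<infinity>}"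

definition tight :: "'a::topological_space measure set \<Rightarrow> bool" where
  "tight F \<longleftrightarrow> (\<forall>e>0. \<exists>K. compact K \<and> (SUP M\<in>F. emeasure M (UNIV - K)) < ennreal e)"

definition M_b_pos :: "'a::topological_space measure set" where
  "M_b_pos = {M. radon_pos M}"

definition narrow_top_b :: "'a::topological_space measure topology" where
  "narrow_top_b = subtopology
     (topology_generated_by
        {{M \<in> M_b_pos. (\<integral> y. \<phi> y \<partial>M) \<in> U} | \<phi> U.
           continuous_on UNIV \<phi> \<and> bounded (range \<phi>) \<and> open (U :: real set)})
     M_b_pos"

definition prohorov_space :: "'a::topological_space itself \<Rightarrow> bool" where
  "prohorov_space _ \<longleftrightarrow>
     (\<forall>K :: 'a measure set. compactin narrow_top_b K \<longrightarrow> tight K)"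

text \<open>Narrow convergence of a sequence in M_kappa(E): convergence in the weakest
  topology making all maps M -> integral phi dM (phi in C_kappa) continuous.\<close>
definition narrow_conv_kappa ::
  "('a::topological_space \<Rightarrow> real) \<Rightarrow> (nat \<Rightarrow> 'a measure) \<Rightarrow> 'a measure \<Rightarrow> bool" where
  "narrow_conv_kappa \<kappa> Ms M \<longleftrightarrow>
     (\<forall>\<phi> \<in> C_kappa \<kappa>. (\<lambda>n. \<integral> y. \<phi> y \<partial>(Ms n)) \<longlonglongrightarrow> (\<integral> y. \<phi> y \<partial>M))"

end

theory Submission
  imports Defs
begin

lemma tail_small:
  fixes g :: "'a \<Rightarrow> real"
  assumes g[measurable]: "g \<in> borel_measurable M" and fin: "(\<integral>\<^sup>+ y. ennreal (g y) \<partial>M) < \<infinity>"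
    and e: "e > 0"
  shows "\<exists>N::nat. (\<integral>\<^sup>+ y. ennreal (g y) * indicator {y. g y > real N} y \<partial>M) < ennreal e"
proof -
  define h where "h = (\<lambda>(N::nat) y. ennreal (g y) * indicator {y. g y > real N} y)"
  have dec: "decseq h"
  proof (rule decseq_SucI, rule le_funI)
    fix n y show "h (Suc n) y \<le> h n y" unfolding h_def by (auto simp: indicator_def)
  qed
  have hm: "h i \<in> borel_measurable M" for i unfolding h_def by measurable
  have hf: "(\<integral>\<^sup>+ x. h i x \<partial>M) < \<infinity>" for i
  proof -
    have "(\<integral>\<^sup>+ x. h i x \<partial>M) \<le> (\<integral>\<^sup>+ y. ennreal (g y) \<partial>M)"
      unfolding h_def by (intro nn_integral_mono) (auto simp: indicator_def)
    then show ?thesis using fin by (simp add: le_less_trans)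
  qed
  have inf0: "(INF i. h i y) = 0" for y
  proof -
    obtain n::nat where "g y \<le> real n" using real_arch_simple by blast
    then have "h n y = 0" unfolding h_def by (auto simp: indicator_def)
    then show ?thesis by (metis (no_types, lifting) INF_lower UNIV_I bot.extremum_uniqueI bot_ennreal)
  qed
  have "(INF i. integral\<^sup>N M (h i)) = 0"
    using nn_integral_monotone_convergence_INF_decseq[OF dec hm hf] inf0 by simp
  then have "(INF i. integral\<^sup>N M (h i)) < ennreal e" using e by simp
  then obtain i where "integral\<^sup>N M (h i) < ennreal e" by (auto simp: INF_less_iff)
  then show ?thesis unfolding h_def by blast
qed

lemma density_inner:
  fixes g :: "'a::topological_space \<Rightarrow> real"
  assumes sM: "sets M = sets borel"
    and reg: "\<forall>B \<in> sets borel. \<forall>e>0. \<exists>C. compact C \<and> C \<subseteq> B \<and> emeasure M (B - C) < ennreal e"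
    and g[measurable]: "g \<in> borel_measurable borel" and g0: "\<And>y. g y \<ge> 0"
    and fin: "(\<integral>\<^sup>+ y. ennreal (g y) \<partial>M) < \<infinity>"
    and B: "B \<in> sets borel" and e: "e > 0" and H: "Hausdorff_space (euclidean :: 'a topology)"
  shows "\<exists>C. compact C \<and> C \<subseteq> B \<and> emeasure (density M (\<lambda>y. ennreal (g y))) (B - C) < ennreal e"
proof -
  have gM[measurable]: "g \<in> borel_measurable M" using g by (simp add: measurable_cong_sets[OF sM refl])
  obtain N::nat where N: "(\<integral>\<^sup>+ y. ennreal (g y) * indicator {y. g y > real N} y \<partial>M) < ennreal (e/2)"
    using tail_small[OF gM fin, of "e/2"] e by auto
  have d: "e / (2 * (real N + 1)) > 0" using e by simp
  obtain C where C: "compact C" "C \<subseteq> B" and mC: "emeasure M (B - C) < ennreal (e / (2 * (real N + 1)))"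
    using reg[rule_format, OF B d] by (elim exE conjE) (rule that)
  have BC: "B - C \<in> sets M" 
  proof -
    have "closed C" using compactin_imp_closedin[OF H, of C] C(1) closed_closedin compactin_euclidean_iff by metis
    then have "B - C \<in> sets borel" by (rule sets.Diff[OF B borel_closed])
    then show ?thesis using sM by simp
  qed
  have "emeasure (density M (\<lambda>y. ennreal (g y))) (B - C) = (\<integral>\<^sup>+ y. ennreal (g y) * indicator (B - C) y \<partial>M)"
    using BC by (simp add: emeasure_density)
  also have "\<dots> \<le> (\<integral>\<^sup>+ y. ennreal (real N) * indicator (B - C) y + ennreal (g y) * indicator {y. g y > real N} y \<partial>M)"
    by (intro nn_integral_mono) (auto simp: indicator_def)
  also have "\<dots> = ennreal (real N) * emeasure M (B - C) + (\<integral>\<^sup>+ y. ennreal (g y) * indicator {y. g y > real N} y \<partial>M)"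
    using BC by (simp add: nn_integral_add nn_integral_cmult_indicator)
  also have "\<dots> < ennreal e"
  proof -
    have "ennreal (real N) * emeasure M (B - C) \<le> ennreal (real N) * ennreal (e / (2 * (real N + 1)))"
      using mC by (intro mult_left_mono) auto
    also have "\<dots> = ennreal (real N * (e / (2 * (real N + 1))))"
      using e by (subst ennreal_mult) auto
    also have "\<dots> \<le> ennreal (e/2)"
    proof (rule ennreal_leI)
      have "real N * (e / (2 * (real N + 1))) = (e/2) * (real N / (real N + 1))" by (simp add: field_simps)
      also have "\<dots> \<le> (e/2) * 1" using e by (intro mult_left_mono) auto
      finally show "real N * (e / (2 * (real N + 1))) \<le> e/2" by simp
    qed
    finally have a: "ennreal (real N) * emeasure M (B - C) \<le> ennreal (e/2)" .
    have "ennreal (real N) * emeasure M (B - C) + (\<integral>\<^sup>+ y. ennreal (g y) * indicator {y. g y > real N} y \<partial>M)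
        \<le> ennreal (e/2) + (\<integral>\<^sup>+ y. ennreal (g y) * indicator {y. g y > real N} y \<partial>M)"
      by (rule add_right_mono[OF a])
    also have "\<dots> < ennreal (e/2) + ennreal (e/2)"
      using N by (simp only: ennreal_add_left_cancel_less) simp
    also have "\<dots> = ennreal e" using e by (simp flip: ennreal_plus)
    finally show ?thesis .
  qed
  finally show ?thesis using C by blast
qed

lemma nu_fin:
  assumes kappa: "weight \<kappa>" and mu: "M \<in> M_kappa_pos \<kappa>"
  shows "(\<integral>\<^sup>+ y. ennreal (\<kappa> x / \<kappa> y) \<partial>M) < \<infinity>"
proof -
  have sM: "sets M = sets borel" using mu by (simp add: M_kappa_pos_def radon_pos_def)
  have kb: "\<kappa> \<in> borel_measurable borel" using kappa by (simp add: weight_def borel_measurable_continuous_onI)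
  then have kM[measurable]: "\<kappa> \<in> borel_measurable M" by (simp add: measurable_cong_sets[OF sM refl])
  have kp: "\<And>y. \<kappa> y > 0" using kappa by (simp add: weight_def)
  have "(\<integral>\<^sup>+ y. ennreal (\<kappa> x / \<kappa> y) \<partial>M) = (\<integral>\<^sup>+ y. ennreal (\<kappa> x) * ennreal (1 / \<kappa> y) \<partial>M)"
    using kp by (intro nn_integral_cong) (simp add: ennreal_mult[symmetric] less_imp_le)
  also have "\<dots> = ennreal (\<kappa> x) * (\<integral>\<^sup>+ y. ennreal (1 / \<kappa> y) \<partial>M)"
    by (rule nn_integral_cmult) measurable
  also have "\<dots> < \<infinity>" using mu by (simp add: M_kappa_pos_def ennreal_mult_less_top)
  finally show ?thesis .
qed

lemma nu_Mb:
  assumes kappa: "weight \<kappa>" and mu: "M \<in> M_kappa_pos \<kappa>"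
    and H: "Hausdorff_space (euclidean :: 'a::topological_space topology)"
  shows "density M (\<lambda>y. ennreal (\<kappa> x / \<kappa> y)) \<in> (M_b_pos :: 'a measure set)"
proof -
  have sM: "sets M = sets borel" using mu by (simp add: M_kappa_pos_def radon_pos_def)
  have kb[measurable]: "\<kappa> \<in> borel_measurable borel" using kappa by (simp add: weight_def borel_measurable_continuous_onI)
  have kp: "\<And>y. \<kappa> y > 0" using kappa by (simp add: weight_def)
  have fin: "(\<integral>\<^sup>+ y. ennreal (\<kappa> x / \<kappa> y) \<partial>M) < \<infinity>" by (rule nu_fin[OF kappa mu])
  have reg: "\<forall>B \<in> sets borel. \<forall>e>0. \<exists>C. compact C \<and> C \<subseteq> B \<and> emeasure M (B - C) < ennreal e"
    using mu by (simp add: M_kappa_pos_def radon_pos_def)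
  have gb: "(\<lambda>y. \<kappa> x / \<kappa> y) \<in> borel_measurable borel" by measurable
  then have gM: "(\<lambda>y. ennreal (\<kappa> x / \<kappa> y)) \<in> borel_measurable M"
    by (simp add: measurable_cong_sets[OF sM refl])
  have "emeasure (density M (\<lambda>y. ennreal (\<kappa> x / \<kappa> y))) UNIV = (\<integral>\<^sup>+ y. ennreal (\<kappa> x / \<kappa> y) \<partial>M)"
  proof -
    have "UNIV \<in> sets M" using sM by simp
    then show ?thesis using emeasure_density[OF gM, of UNIV] by simp
  qed
  then have u: "emeasure (density M (\<lambda>y. ennreal (\<kappa> x / \<kappa> y))) UNIV < \<infinity>" using fin by simp
  show ?thesis unfolding M_b_pos_def radon_pos_def
  proof (intro CollectI conjI ballI allI impI)
    show "sets (density M (\<lambda>y. ennreal (\<kappa> x / \<kappa> y))) = sets borel" using sM by simp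
    show "emeasure (density M (\<lambda>y. ennreal (\<kappa> x / \<kappa> y))) UNIV < \<infinity>" by (rule u)
    fix B :: "'a set" and e :: real assume "B \<in> sets borel" "e > 0"
    then show "\<exists>C. compact C \<and> C \<subseteq> B \<and> emeasure (density M (\<lambda>y. ennreal (\<kappa> x / \<kappa> y))) (B - C) < ennreal e"
      using density_inner[OF sM reg gb _ fin _ _ H] kp by (simp add: less_imp_le)
  qed
qed

lemma nu_integral:
  assumes kappa: "weight \<kappa>" and mu: "M \<in> M_kappa_pos \<kappa>"
    and phi: "\<phi> \<in> borel_measurable borel"
  shows "(\<integral> y. \<phi> y \<partial>density M (\<lambda>y. ennreal (\<kappa> x / \<kappa> y))) = \<kappa> x * (\<integral> y. \<phi> y / \<kappa> y \<partial>M)"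
proof -
  have sM: "sets M = sets borel" using mu by (simp add: M_kappa_pos_def radon_pos_def)
  have kb[measurable]: "\<kappa> \<in> borel_measurable borel" using kappa by (simp add: weight_def borel_measurable_continuous_onI)
  have kp: "\<And>y. \<kappa> y > 0" using kappa by (simp add: weight_def)
  have gb: "(\<lambda>y. \<kappa> x / \<kappa> y) \<in> borel_measurable borel" by measurable
  then have gM: "(\<lambda>y. \<kappa> x / \<kappa> y) \<in> borel_measurable M"
    by (simp add: measurable_cong_sets[OF sM refl])
  have pM: "\<phi> \<in> borel_measurable M" using phi by (simp add: measurable_cong_sets[OF sM refl])
  have "(\<integral> y. \<phi> y \<partial>density M (\<lambda>y. ennreal (\<kappa> x / \<kappa> y))) = (\<integral> y. (\<kappa> x / \<kappa> y) *\<^sub>R \<phi> y \<partial>M)"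
    using kp by (intro integral_density[OF pM gM] AE_I2) (simp add: less_imp_le)
  also have "\<dots> = (\<integral> y. \<kappa> x * (\<phi> y / \<kappa> y) \<partial>M)" by simp
  also have "\<dots> = \<kappa> x * (\<integral> y. \<phi> y / \<kappa> y \<partial>M)" by (rule integral_mult_right_zero)
  finally show ?thesis .
qed

lemma tight_mono: "F \<subseteq> G \<Longrightarrow> tight G \<Longrightarrow> tight F"
  unfolding tight_def
proof (intro allI impI)
  fix e :: real assume "F \<subseteq> G" "\<forall>e>0. \<exists>K. compact K \<and> (SUP M\<in>G. emeasure M (UNIV - K)) < ennreal e" "e > 0"
  then obtain K where "compact K" "(SUP M\<in>G. emeasure M (UNIV - K)) < ennreal e" by blast
  moreover have "(SUP M\<in>F. emeasure M (UNIV - K)) \<le> (SUP M\<in>G. emeasure M (UNIV - K))"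
    using \<open>F \<subseteq> G\<close> by (rule SUP_subset_mono) simp
  ultimately show "\<exists>K. compact K \<and> (SUP M\<in>F. emeasure M (UNIV - K)) < ennreal e"
    using le_less_trans by blast
qed

theorem proposition3p6:
  fixes \<kappa> :: "'a::topological_space \<Rightarrow> real"
    and \<mu> :: "real \<Rightarrow> 'a \<Rightarrow> 'a measure"
  assumes E: "standing_space TYPE('a)"
    and kappa: "weight \<kappa>"
    and prohorov: "prohorov_space TYPE('a)"
    and mu_in: "\<And>t x. t \<ge> 0 \<Longrightarrow> \<mu> t x \<in> M_kappa_pos \<kappa>"
    and mu_meas: "\<And>t B. t \<ge> 0 \<Longrightarrow> B \<in> sets borel \<Longrightarrow>
                    (\<lambda>x. emeasure (\<mu> t x) B) \<in> borel_measurable borel"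
    and mu_0: "\<And>x. \<mu> 0 x = return borel x"
    and bound: "\<And>T. T \<ge> 0 \<Longrightarrow>
        (SUP t\<in>{0..T}. SUP x. ennreal (\<kappa> x) * (\<integral>\<^sup>+ y. ennreal (1 / \<kappa> y) \<partial>(\<mu> t x))) < \<infinity>"
    and cont: "\<And>T C \<phi>. T > 0 \<Longrightarrow> compact C \<Longrightarrow> \<phi> \<in> C_kappa \<kappa> \<Longrightarrow>
        continuous_on ({0..T} \<times> C) (\<lambda>(t, x). \<integral> y. \<phi> y \<partial>(\<mu> t x))"
  shows "(\<forall>T C. T \<ge> 0 \<longrightarrow> compact C \<longrightarrow>
            tight ((\<lambda>(t, x). density (\<mu> t x) (\<lambda>y. ennreal (\<kappa> x / \<kappa> y))) ` ({0..T} \<times> C)))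
       \<and> (\<forall>x xs ts. xs \<longlonglongrightarrow> x \<longrightarrow> (\<forall>n. ts n \<ge> 0) \<longrightarrow> ts \<longlonglongrightarrow> 0 \<longrightarrow>
            narrow_conv_kappa \<kappa> (\<lambda>n. \<mu> (ts n) (xs n)) (return borel x))"
proof (intro conjI allI impI)
  fix x :: 'a and xs :: "nat \<Rightarrow> 'a" and ts :: "nat \<Rightarrow> real"
  assume xs: "xs \<longlonglongrightarrow> x" and ts0: "\<forall>n. ts n \<ge> 0" and ts: "ts \<longlonglongrightarrow> 0"
  show "narrow_conv_kappa \<kappa> (\<lambda>n. \<mu> (ts n) (xs n)) (return borel x)"
    unfolding narrow_conv_kappa_def
  proof
    fix \<phi> assume phi: "\<phi> \<in> C_kappa \<kappa>"
    define K where "K = insert x (range xs)"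
    have "compactin euclidean K" unfolding K_def
      by (rule compactin_sequence_with_limit) (use xs in auto)
    then have K: "compact K" by simp
    have c: "continuous_on ({0..1} \<times> K) (\<lambda>(t, x). \<integral> y. \<phi> y \<partial>(\<mu> t x))"
      by (rule cont[OF _ K phi]) simp
    have ev: "\<forall>\<^sub>F n in sequentially. (ts n, xs n) \<in> {0..1} \<times> K"
    proof -
      have "\<forall>\<^sub>F n in sequentially. ts n < 1" using ts by (rule order_tendstoD) simp
      then show ?thesis by eventually_elim (use ts0 in \<open>auto simp: K_def less_imp_le\<close>)
    qed
    have "((\<lambda>n. (\<lambda>(t, x). \<integral> y. \<phi> y \<partial>(\<mu> t x)) (ts n, xs n)) \<longlongrightarrow> (\<lambda>(t, x). \<integral> y. \<phi> y \<partial>(\<mu> t x)) (0, x)) sequentially"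
      by (rule continuous_on_tendsto_compose[OF c tendsto_Pair[OF ts xs] _ ev]) (simp add: K_def)
    then show "(\<lambda>n. \<integral> y. \<phi> y \<partial>(\<mu> (ts n) (xs n))) \<longlonglongrightarrow> (\<integral> y. \<phi> y \<partial>(return borel x))"
      by (simp add: mu_0)
  qed
next
  fix T :: real and C :: "'a set"
  assume T: "T \<ge> 0" and C: "compact C"
  define T' where "T' = max T 1"
  define S where "S = {0..T'} \<times> C"
  define \<nu> where "\<nu> = (\<lambda>(t, x). density (\<mu> t x) (\<lambda>y. ennreal (\<kappa> x / \<kappa> y)))"
  have H: "Hausdorff_space (euclidean :: 'a topology)" by (rule conjunct1[OF conjunct2[OF E[unfolded standing_space_def]]])
  have inS: "\<mu> (fst p) (snd p) \<in> M_kappa_pos \<kappa>" if "p \<in> S" for p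
    using that by (intro mu_in) (auto simp: S_def)
  have nuMb: "\<nu> p \<in> M_b_pos" if "p \<in> S" for p
    using nu_Mb[OF kappa inS[OF that] H, of "snd p"] by (simp add: \<nu>_def case_prod_beta)
  have nuint: "(\<integral> y. \<phi> y \<partial>\<nu> p) = \<kappa> (snd p) * (\<integral> y. \<phi> y / \<kappa> y \<partial>\<mu> (fst p) (snd p))"
    if "p \<in> S" "\<phi> \<in> borel_measurable borel" for p \<phi>
    using nu_integral[OF kappa inS[OF that(1)] that(2), of "snd p"] by (simp add: \<nu>_def case_prod_beta)
  have kp: "\<And>y. \<kappa> y > 0" using kappa by (simp add: weight_def)
  have kc: "continuous_on UNIV \<kappa>" using kappa by (simp add: weight_def)
  have contF: "continuous_on S (\<lambda>p. \<kappa> (snd p) * (\<integral> y. \<phi> y / \<kappa> y \<partial>\<mu> (fst p) (snd p)))"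
    if phic: "continuous_on UNIV \<phi>" and phib: "bounded (range \<phi>)" for \<phi> :: "'a \<Rightarrow> real"
  proof -
    have psi: "(\<lambda>y. \<phi> y / \<kappa> y) \<in> C_kappa \<kappa>"
      unfolding C_kappa_def
    proof (intro CollectI conjI)
      show "continuous_on UNIV (\<lambda>y. \<phi> y / \<kappa> y)"
        using phic kc kp by (intro continuous_on_divide) (auto simp: less_imp_neq[symmetric])
      obtain B where "\<forall>y\<in>range \<phi>. norm y \<le> B" using phib by (auto simp: bounded_iff)
      then have "\<forall>y. \<bar>\<kappa> y * (\<phi> y / \<kappa> y)\<bar> \<le> B" using kp by (simp add: less_imp_neq[symmetric])
      then show "\<exists>B. \<forall>y. \<bar>\<kappa> y * (\<phi> y / \<kappa> y)\<bar> \<le> B" by blast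
    qed
    have c1: "continuous_on S (\<lambda>p. \<integral> y. \<phi> y / \<kappa> y \<partial>\<mu> (fst p) (snd p))"
      using cont[OF _ C psi, of T'] by (simp add: S_def T'_def case_prod_beta)
    have c2: "continuous_on S (\<lambda>p. \<kappa> (snd p))"
      by (rule continuous_on_compose2[OF kc]) (auto intro: continuous_intros)
    show ?thesis by (intro continuous_on_mult c1 c2)
  qed
  define \<S> where "\<S> = {{M \<in> (M_b_pos :: 'a measure set). (\<integral> y. (\<phi> y :: real) \<partial>M) \<in> U} | \<phi> U.
           continuous_on UNIV \<phi> \<and> bounded (range \<phi>) \<and> open (U :: real set)}"
  have cm: "continuous_map (top_of_set S) narrow_top_b \<nu>"
    unfolding narrow_top_b_def continuous_map_in_subtopology \<S>_def[symmetric]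
  proof (intro conjI continuous_on_generated_topo)
    fix U assume "U \<in> \<S>"
    then obtain \<phi> :: "'a \<Rightarrow> real" and V :: "real set" where U: "U = {M \<in> M_b_pos. (\<integral> y. \<phi> y \<partial>M) \<in> V}" and phic: "continuous_on UNIV \<phi>"
      and phib: "bounded (range \<phi>)" and V: "open V" unfolding \<S>_def by blast
    have pb: "\<phi> \<in> borel_measurable borel" using phic by (rule borel_measurable_continuous_onI)
    have "\<nu> -` U \<inter> topspace (top_of_set S) =
        S \<inter> (\<lambda>p. \<kappa> (snd p) * (\<integral> y. \<phi> y / \<kappa> y \<partial>\<mu> (fst p) (snd p))) -` V"
      using nuMb nuint[OF _ pb] by (auto simp: U)
    moreover have "openin (top_of_set S) (S \<inter> (\<lambda>p. \<kappa> (snd p) * (\<integral> y. \<phi> y / \<kappa> y \<partial>\<mu> (fst p) (snd p))) -` V)"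
      by (rule continuous_openin_preimage[OF contF[OF phic phib], of UNIV]) (use V in auto)
    ultimately show "openin (top_of_set S) (\<nu> -` U \<inter> topspace (top_of_set S))" by simp
  next
    have "M_b_pos \<in> \<S>" unfolding \<S>_def
      by (rule CollectI, rule exI[of _ "\<lambda>_. 0"], rule exI[of _ UNIV]) auto
    then show "\<nu> ` topspace (top_of_set S) \<subseteq> \<Union> \<S>" using nuMb by auto
  next
    show "\<nu> \<in> topspace (top_of_set S) \<rightarrow> M_b_pos" using nuMb by auto
  qed
  have "compactin (top_of_set S) S" using C by (simp add: compactin_subtopology S_def compact_Times)
  then have "compactin narrow_top_b (\<nu> ` S)" by (rule image_compactin[OF _ cm])
  then have "tight (\<nu> ` S)" using prohorov by (simp add: prohorov_space_def)
  moreover have "\<nu> ` ({0..T} \<times> C) \<subseteq> \<nu> ` S" unfolding S_def T'_def by auto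
  ultimately show "tight ((\<lambda>(t, x). density (\<mu> t x) (\<lambda>y. ennreal (\<kappa> x / \<kappa> y))) ` ({0..T} \<times> C))"
    using tight_mono unfolding \<nu>_def by blast
qed

end
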